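(* For a partition $\lambda$, the crystal skeleton $\mathsf{CS}(\lambda)$ is strongly connected if and only if $\lambda=(w^\ell)$ is a rectangle (all parts equal).
   Context: French notation; $|\lambda|=N$; $\mathsf{SYT}(\lambda)$ standard tableaux; $\mathsf{SSYT}(\lambda)_n$ semistandard tableaux with entries in $[n]$; $\mathsf{row}(b)$ reads rows left to right from the top row to the bottom row; $\mathsf{std}(b)$ replaces the $a_j$ entries $j$, in reading order, by $a_1+\dots+a_{j-1}+1,\dots,a_1+\dots+a_j$. The crystal $B(\lambda)_n$ is $\mathsf{SSYT}(\lambda)_n$ with operators $f_i$ ($1\le i<n$): in the subword of $\mathsf{row}(b)$ of letters $i,i+1$, bracket each $i+1$ with an unbracketed $i$ to its right (parenthesis matching); the unbracketed letters form $i^r(i+1)^s$ and $f_i$ changes the rightmost unbracketed $i$ to $i+1$ ($\emptyset$ if $r=0$). Fix $n\ge N$. The crystal skeleton $\mathsf{CS}(\lambda)$ is the directed graph on $\mathsf{SYT}(\lambda)$ with an edge $T\to T'$ ($T\ne T'$) whenever there are $b,b'\in B(\lambda)_n$ with $\mathsf{std}(b)=T$, $\mathsf{std}(b')=T'$ and $f_i(b)=b'$ for some $i$. A directed graph is strongly connected if any vertex can be reached from any other by a directed path. *)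

theory Defs
  imports Main
begin

definition is_partition :: "nat list \<Rightarrow> bool" where
  "is_partition la \<longleftrightarrow> sorted_wrt (\<ge>) la \<and> 0 \<notin> set la"

text \<open>Cells of the Young diagram in French notation: row r (r = 0 is the bottom,
  longest row), column c.\<close>
definition cells :: "nat list \<Rightarrow> (nat \<times> nat) set" where
  "cells la = {(r, c). r < length la \<and> c < la ! r}"

definition SSYT :: "nat list \<Rightarrow> nat \<Rightarrow> ((nat \<times> nat) \<Rightarrow> nat) set" where
  "SSYT la n = {T. (\<forall>p. p \<notin> cells la \<longrightarrow> T p = 0)
      \<and> (\<forall>p\<in>cells la. 1 \<le> T p \<and> T p \<le> n)
      \<and> (\<forall>r c. (r, Suc c) \<in> cells la \<longrightarrow> T (r, c) \<le> T (r, Suc c))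
      \<and> (\<forall>r c. (Suc r, c) \<in> cells la \<longrightarrow> T (r, c) < T (Suc r, c))}"

definition SYT :: "nat list \<Rightarrow> ((nat \<times> nat) \<Rightarrow> nat) set" where
  "SYT la = {T. (\<forall>p. p \<notin> cells la \<longrightarrow> T p = 0)
      \<and> bij_betw T (cells la) {1..sum_list la}
      \<and> (\<forall>r c. (r, Suc c) \<in> cells la \<longrightarrow> T (r, c) < T (r, Suc c))
      \<and> (\<forall>r c. (Suc r, c) \<in> cells la \<longrightarrow> T (r, c) < T (Suc r, c))}"

definition row_word :: "nat list \<Rightarrow> ((nat \<times> nat) \<Rightarrow> nat) \<Rightarrow> nat list" where
  "row_word la T = concat (map (\<lambda>r. map (\<lambda>c. T (r, c)) [0..<la ! r]) (rev [0..<length la]))"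

definition read_before :: "nat \<times> nat \<Rightarrow> nat \<times> nat \<Rightarrow> bool" where
  "read_before p q \<longleftrightarrow> fst p > fst q \<or> (fst p = fst q \<and> snd p < snd q)"

definition std :: "nat list \<Rightarrow> ((nat \<times> nat) \<Rightarrow> nat) \<Rightarrow> ((nat \<times> nat) \<Rightarrow> nat)" where
  "std la b q = (if q \<in> cells la then
      card {p \<in> cells la. b p < b q} + card {p \<in> cells la. b p = b q \<and> read_before p q} + 1
    else 0)"

text \<open>Positions of the unbracketed letters i in a word (letters i+1 are brackets
  matched with unbracketed i's to their right); d counts currently open i+1's,
  p is the current position.\<close>
fun unbr :: "nat \<Rightarrow> nat \<Rightarrow> nat list \<Rightarrow> nat \<Rightarrow> nat list" where
  "unbr i d [] p = []"
| "unbr i d (x # xs) p =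
     (if x = Suc i then unbr i (Suc d) xs (Suc p)
      else if x = i then (if d > 0 then unbr i (d - 1) xs (Suc p) else p # unbr i d xs (Suc p))
      else unbr i d xs (Suc p))"

text \<open>Crystal operator f_i on words (None stands for the zero element).\<close>
definition f_word :: "nat \<Rightarrow> nat list \<Rightarrow> nat list option" where
  "f_word i w = (case unbr i 0 w 0 of [] \<Rightarrow> None | ps \<Rightarrow> Some (w[last ps := Suc i]))"

text \<open>f_i(b) = b' in B(lambda)_n: f_i acts on the reading word, and the reading word
  determines the tableau of the given shape.\<close>
definition crystal_f :: "nat list \<Rightarrow> nat \<Rightarrow> ((nat \<times> nat) \<Rightarrow> nat) \<Rightarrow> ((nat \<times> nat) \<Rightarrow> nat) \<Rightarrow> bool" where
  "crystal_f la i b b' \<longleftrightarrow> f_word i (row_word la b) = Some (row_word la b')"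

definition CS_edges :: "nat list \<Rightarrow> nat \<Rightarrow> (((nat \<times> nat) \<Rightarrow> nat) \<times> ((nat \<times> nat) \<Rightarrow> nat)) set" where
  "CS_edges la n = {(T, T'). T \<in> SYT la \<and> T' \<in> SYT la \<and> T \<noteq> T' \<and>
      (\<exists>b\<in>SSYT la n. \<exists>b'\<in>SSYT la n. \<exists>i. 1 \<le> i \<and> i < n \<and>
          std la b = T \<and> std la b' = T' \<and> crystal_f la i b b')}"

definition strongly_connected_on :: "'a set \<Rightarrow> ('a \<times> 'a) set \<Rightarrow> bool" where
  "strongly_connected_on V E \<longleftrightarrow> (\<forall>x\<in>V. \<forall>y\<in>V. (x, y) \<in> E\<^sup>*)"

definition is_rectangle :: "nat list \<Rightarrow> bool" where
  "is_rectangle la \<longleftrightarrow> (\<exists>w l. la = replicate l w)"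

end

theory Submission
  imports Defs
begin


definition cell_list :: "nat list \<Rightarrow> (nat \<times> nat) list" where
  "cell_list la = concat (map (\<lambda>r. map (\<lambda>c. (r, c)) [0..<la ! r]) (rev [0..<length la]))"

lemma row_word_cl: "row_word la b = map b (cell_list la)"
  unfolding row_word_def cell_list_def by (simp add: map_concat comp_def)

lemma set_cell_list: "set (cell_list la) = cells la"
  unfolding cell_list_def cells_def by auto

lemma sorted_rows: "sorted_wrt (>) rs \<Longrightarrow>
  sorted_wrt read_before (concat (map (\<lambda>r. map (\<lambda>c. (r, c)) [0..<la ! r]) rs))"
proof (induction rs)
  case Nil then show ?case by simp
next
  case (Cons r rs)
  have h: "sorted_wrt read_before (map (\<lambda>c. (r, c)) [0..<la ! r])"
    by (simp add: sorted_wrt_map read_before_def)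
  show ?case using Cons h
    by (auto simp add: sorted_wrt_append read_before_def[abs_def])
qed

lemma sorted_cell_list: "sorted_wrt read_before (cell_list la)"
  unfolding cell_list_def by (rule sorted_rows) (simp add: sorted_wrt_rev)

lemma read_before_irrefl: "\<not> read_before p p"
  by (simp add: read_before_def)

lemma read_before_asym: "read_before p q \<Longrightarrow> \<not> read_before q p"
  by (auto simp add: read_before_def)

lemma read_before_trans: "read_before p q \<Longrightarrow> read_before q s \<Longrightarrow> read_before p s"
  by (auto simp add: read_before_def)

lemma read_before_total: "p \<noteq> q \<Longrightarrow> read_before p q \<or> read_before q p"
  by (cases p; cases q) (auto simp add: read_before_def)

lemma sorted_wrt_irrefl_distinct: "sorted_wrt R xs \<Longrightarrow> (\<forall>x. \<not> R x x) \<Longrightarrow> distinct xs"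
  by (induction xs) auto

lemma distinct_cell_list: "distinct (cell_list la)"
  using sorted_cell_list read_before_irrefl sorted_wrt_irrefl_distinct by blast

lemma length_cell_list: "length (cell_list la) = sum_list la"
proof -
  have "length (cell_list la) = sum_list (map (\<lambda>r. la ! r) (rev [0..<length la]))"
    unfolding cell_list_def by (simp add: length_concat comp_def)
  also have "\<dots> = sum_list (map (\<lambda>r. la ! r) [0..<length la])"
    by (simp add: rev_map[symmetric] sum_list_rev)
  also have "\<dots> = sum_list la" by (simp add: map_nth)
  finally show ?thesis .
qed

lemma finite_cells: "finite (cells la)"
  using set_cell_list by (metis List.finite_set)

lemma card_cells: "card (cells la) = sum_list la"
  using set_cell_list distinct_cell_list length_cell_list by (metis distinct_card)

lemma cl_read_iff: "s < length (cell_list la) \<Longrightarrow> t < length (cell_list la) \<Longrightarrow>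
   read_before (cell_list la ! s) (cell_list la ! t) \<longleftrightarrow> s < t"
  using sorted_wrt_nth_less[OF sorted_cell_list] read_before_asym read_before_irrefl
  by (metis linorder_neqE_nat)

lemma cl_index: "p \<in> cells la \<Longrightarrow> \<exists>s < sum_list la. cell_list la ! s = p"
  using set_cell_list length_cell_list by (metis in_set_conv_nth)

lemma cl_in: "s < sum_list la \<Longrightarrow> cell_list la ! s \<in> cells la"
  using set_cell_list length_cell_list by (metis nth_mem)

lemma cl_inj: "s < sum_list la \<Longrightarrow> t < sum_list la \<Longrightarrow> cell_list la ! s = cell_list la ! t \<Longrightarrow> s = t"
  using distinct_cell_list length_cell_list by (metis nth_eq_iff_index_eq)



definition ltb :: "((nat \<times> nat) \<Rightarrow> nat) \<Rightarrow> nat \<times> nat \<Rightarrow> nat \<times> nat \<Rightarrow> bool" where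
  "ltb b p q \<longleftrightarrow> b p < b q \<or> (b p = b q \<and> read_before p q)"

lemma ltb_irrefl: "\<not> ltb b p p"
  by (simp add: ltb_def read_before_def)

lemma ltb_trans: "ltb b p q \<Longrightarrow> ltb b q s \<Longrightarrow> ltb b p s"
  unfolding ltb_def using read_before_trans[of p q s] by auto

lemma ltb_asym: "ltb b p q \<Longrightarrow> \<not> ltb b q p"
  unfolding ltb_def using read_before_asym[of p q] by auto

lemma ltb_total: "p \<noteq> q \<Longrightarrow> ltb b p q \<or> ltb b q p"
  unfolding ltb_def using read_before_total by (metis linorder_neqE_nat)

lemma std_eq: "q \<in> cells la \<Longrightarrow> std la b q = card {p \<in> cells la. ltb b p q} + 1"
proof -
  assume q: "q \<in> cells la"
  have e: "{p \<in> cells la. ltb b p q} = {p \<in> cells la. b p < b q} \<union> {p \<in> cells la. b p = b q \<and> read_before p q}"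
    unfolding ltb_def by auto
  have "card ({p \<in> cells la. b p < b q} \<union> {p \<in> cells la. b p = b q \<and> read_before p q})
     = card {p \<in> cells la. b p < b q} + card {p \<in> cells la. b p = b q \<and> read_before p q}"
    by (rule card_Un_disjoint) (auto simp: finite_cells)
  then show ?thesis using q e by (simp add: std_def)
qed

lemma std_out: "q \<notin> cells la \<Longrightarrow> std la b q = 0"
  by (simp add: std_def)

lemma std_mono: "p \<in> cells la \<Longrightarrow> q \<in> cells la \<Longrightarrow> ltb b p q \<Longrightarrow> std la b p < std la b q"
proof -
  assume p: "p \<in> cells la" and q: "q \<in> cells la" and pq: "ltb b p q"
  have "{s \<in> cells la. ltb b s p} \<subset> {s \<in> cells la. ltb b s q}"
    using p pq ltb_trans ltb_irrefl by blast
  then have "card {s \<in> cells la. ltb b s p} < card {s \<in> cells la. ltb b s q}"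
    by (rule psubset_card_mono[rotated]) (simp add: finite_cells)
  then show ?thesis using p q by (simp add: std_eq)
qed

lemma std_le_N: "q \<in> cells la \<Longrightarrow> std la b q \<le> sum_list la"
proof -
  assume q: "q \<in> cells la"
  have "{s \<in> cells la. ltb b s q} \<subseteq> cells la - {q}" using ltb_irrefl by blast
  then have "card {s \<in> cells la. ltb b s q} \<le> card (cells la - {q})"
    by (rule card_mono[rotated]) (simp add: finite_cells)
  also have "\<dots> = sum_list la - 1" using q by (simp add: card_cells finite_cells)
  finally show ?thesis using q std_eq[OF q, of b] card_cells
    by (metis One_nat_def Suc_leI add.commute card_gt_0_iff empty_iff finite_cells
        le_diff_conv2 plus_1_eq_Suc)
qed

lemma std_N_iff: "q \<in> cells la \<Longrightarrow>
   std la b q = sum_list la \<longleftrightarrow> (\<forall>p\<in>cells la. p \<noteq> q \<longrightarrow> ltb b p q)"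
proof -
  assume q: "q \<in> cells la"
  have sub: "{s \<in> cells la. ltb b s q} \<subseteq> cells la - {q}" using ltb_irrefl by blast
  have cq: "card (cells la - {q}) = sum_list la - 1" using q by (simp add: card_cells finite_cells)
  have N: "sum_list la \<ge> 1" using q card_cells finite_cells
    by (metis One_nat_def Suc_leI card_gt_0_iff empty_iff)
  show ?thesis
  proof
    assume "std la b q = sum_list la"
    then have "card {s \<in> cells la. ltb b s q} = card (cells la - {q})"
      using std_eq[OF q, of b] cq N by simp
    then have "{s \<in> cells la. ltb b s q} = cells la - {q}"
      using sub by (simp add: card_subset_eq finite_cells)
    then show "\<forall>p\<in>cells la. p \<noteq> q \<longrightarrow> ltb b p q" by blast
  next
    assume "\<forall>p\<in>cells la. p \<noteq> q \<longrightarrow> ltb b p q"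
    then have "{s \<in> cells la. ltb b s q} = cells la - {q}" using sub by blast
    then show "std la b q = sum_list la" using std_eq[OF q, of b] cq N by simp
  qed
qed

lemma std_bij: "bij_betw (std la b) (cells la) {1..sum_list la}"
proof -
  have inj: "inj_on (std la b) (cells la)"
  proof (rule inj_onI)
    fix p q assume p: "p \<in> cells la" and q: "q \<in> cells la" and e: "std la b p = std la b q"
    show "p = q"
    proof (rule ccontr)
      assume "p \<noteq> q"
      then have "ltb b p q \<or> ltb b q p" by (rule ltb_total)
      then show False using std_mono[OF p q, of b] std_mono[OF q p, of b] e by auto
    qed
  qed
  have sub: "std la b ` cells la \<subseteq> {1..sum_list la}"
    using std_le_N std_eq by fastforce
  have "card (std la b ` cells la) = card {1..sum_list la}"
    using card_image[OF inj] card_cells by simp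
  then have "std la b ` cells la = {1..sum_list la}"
    using sub by (simp add: card_subset_eq)
  then show ?thesis using inj by (simp add: bij_betw_def)
qed

lemma cell_below: "is_partition la \<Longrightarrow> (Suc r, c) \<in> cells la \<Longrightarrow> (r, c) \<in> cells la"
proof -
  assume p: "is_partition la" and h: "(Suc r, c) \<in> cells la"
  then have "la ! Suc r \<le> la ! r"
    using sorted_wrt_nth_less[of "(\<ge>)" la r "Suc r"] by (auto simp: is_partition_def cells_def)
  then show ?thesis using h by (auto simp: cells_def)
qed

lemma std_SYT: "is_partition la \<Longrightarrow> b \<in> SSYT la n \<Longrightarrow> std la b \<in> SYT la"
proof -
  assume P: "is_partition la" and b: "b \<in> SSYT la n"
  have row: "(r, Suc c) \<in> cells la \<Longrightarrow> std la b (r, c) < std la b (r, Suc c)" for r c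
  proof -
    assume h: "(r, Suc c) \<in> cells la"
    then have h0: "(r, c) \<in> cells la" by (simp add: cells_def)
    have "ltb b (r, c) (r, Suc c)" using b h by (auto simp: SSYT_def ltb_def read_before_def le_less)
    then show ?thesis using std_mono h h0 by blast
  qed
  have col: "(Suc r, c) \<in> cells la \<Longrightarrow> std la b (r, c) < std la b (Suc r, c)" for r c
  proof -
    assume h: "(Suc r, c) \<in> cells la"
    have h0: "(r, c) \<in> cells la" using h P cell_below by blast
    have "ltb b (r, c) (Suc r, c)" using b h by (auto simp: SSYT_def ltb_def)
    then show ?thesis using std_mono h h0 by blast
  qed
  show ?thesis unfolding SYT_def using std_out std_bij row col by blast
qed



definition wt :: "nat \<Rightarrow> nat \<Rightarrow> int" where
  "wt i v = (if v = Suc i then 1 else if v = i then -1 else 0)"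

definition Pw :: "nat \<Rightarrow> nat list \<Rightarrow> nat \<Rightarrow> int" where
  "Pw i w t = sum_list (map (wt i) (take t w))"

definition okk :: "nat \<Rightarrow> nat \<Rightarrow> nat list \<Rightarrow> nat \<Rightarrow> bool" where
  "okk i d xs k \<longleftrightarrow> int d + Pw i xs k \<le> 0 \<and> (\<forall>q\<le>k. Pw i xs k \<le> Pw i xs q)"

lemma Pw_0[simp]: "Pw i xs 0 = 0" by (simp add: Pw_def)

lemma Pw_Cons_Suc[simp]: "Pw i (x # xs) (Suc k) = wt i x + Pw i xs k"
  by (simp add: Pw_def)

lemma all_le_Suc: "(\<forall>q\<le>Suc k. A q) \<longleftrightarrow> A 0 \<and> (\<forall>q\<le>k. A (Suc q))"
  by (metis Suc_le_mono le0 not0_implies_Suc)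

lemma okk_Cons_Suc: "okk i d (x # xs) (Suc k) \<longleftrightarrow>
   (int d + wt i x + Pw i xs k \<le> 0 \<and> wt i x + Pw i xs k \<le> 0 \<and> (\<forall>q\<le>k. Pw i xs k \<le> Pw i xs q))"
proof -
  have "(\<forall>q\<le>Suc k. wt i x + Pw i xs k \<le> Pw i (x # xs) q) \<longleftrightarrow>
     wt i x + Pw i xs k \<le> 0 \<and> (\<forall>q\<le>k. Pw i xs k \<le> Pw i xs q)"
    using all_le_Suc[where A = "\<lambda>q. wt i x + Pw i xs k \<le> Pw i (x # xs) q"] by simp
  then show ?thesis unfolding okk_def by (simp add: add.assoc)
qed

lemma okk_Cons_0: "okk i d (x # xs) 0 \<longleftrightarrow> d = 0"
  by (simp add: okk_def)

lemma okk_step: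
  "okk i d (x # xs) (Suc k) \<longleftrightarrow>
    okk i (if x = Suc i then Suc d else if x = i then d - 1 else d) xs k"
proof -
  have R0: "(\<forall>q\<le>k. Pw i xs k \<le> Pw i xs q) \<Longrightarrow> Pw i xs k \<le> 0"
    by (metis Pw_0 le0)
  show ?thesis
    unfolding okk_Cons_Suc unfolding okk_def using R0
    by (auto simp: wt_def of_nat_diff)
qed

lemma unbr_char:
  "unbr i d xs p = map (\<lambda>k. k + p) (filter (\<lambda>k. xs ! k = i \<and> okk i d xs k) [0..<length xs])"
proof (induction xs arbitrary: d p)
  case Nil then show ?case by simp
next
  case (Cons x xs)
  have up: "[0..<length (x # xs)] = 0 # map Suc [0..<length xs]"
    by (simp add: upt_conv_Cons map_Suc_upt del: upt_Suc)
  define d' where "d' = (if x = Suc i then Suc d else if x = i then d - 1 else d)"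
  have rest: "map (\<lambda>k. k + p) (filter (\<lambda>k. (x # xs) ! k = i \<and> okk i d (x # xs) k) (map Suc [0..<length xs]))
      = map (\<lambda>k. k + Suc p) (filter (\<lambda>k. xs ! k = i \<and> okk i d' xs k) [0..<length xs])"
    by (simp add: filter_map comp_def okk_step d'_def)
  have "unbr i d (x # xs) p = (if x = i \<and> d = 0 then [p] else []) @ unbr i d' xs (Suc p)"
    by (simp add: d'_def)
  also have "\<dots> = (if x = i \<and> d = 0 then [p] else []) @ map (\<lambda>k. k + Suc p) (filter (\<lambda>k. xs ! k = i \<and> okk i d' xs k) [0..<length xs])"
    using Cons.IH by simp
  also have "\<dots> = map (\<lambda>k. k + p) (filter (\<lambda>k. (x # xs) ! k = i \<and> okk i d (x # xs) k) [0..<length (x # xs)])"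
    unfolding up rest[symmetric] by (simp add: okk_Cons_0)
  finally show ?case .
qed



definition U :: "nat \<Rightarrow> nat list \<Rightarrow> nat \<Rightarrow> bool" where
  "U i w k \<longleftrightarrow> k < length w \<and> w ! k = i \<and> (\<forall>q\<le>k. Pw i w k \<le> Pw i w q)"

lemma unbr0: "unbr i 0 w 0 = filter (\<lambda>k. U i w k) [0..<length w]"
proof -
  have "okk i 0 w k \<longleftrightarrow> (\<forall>q\<le>k. Pw i w k \<le> Pw i w q)" for k
    unfolding okk_def by (metis Pw_0 le0 of_nat_0 add_0)
  then show ?thesis unfolding unbr_char U_def
    by (auto intro!: filter_cong)
qed

lemma sorted_last_max: "sorted xs \<Longrightarrow> x \<in> set xs \<Longrightarrow> x \<le> last (xs :: nat list)"
  by (induction xs) (auto simp: last_in_set)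

lemma f_word_Some:
  assumes "f_word i w = Some w'"
  shows "\<exists>k. U i w k \<and> (\<forall>k'. U i w k' \<longrightarrow> k' \<le> k) \<and> w' = w[k := Suc i]"
proof -
  define L where "L = filter (\<lambda>k. U i w k) [0..<length w]"
  have L: "L \<noteq> []" using assms unfolding f_word_def unbr0 L_def[symmetric]
    by (cases L) auto
  then have w': "w' = w[last L := Suc i]" using assms unfolding f_word_def unbr0 L_def[symmetric]
    by (cases L) auto
  have sL: "sorted L" unfolding L_def by (simp add: sorted_filter[where f=id, simplified])
  have "last L \<in> set L" using L by simp
  then have "U i w (last L)" unfolding L_def by simp
  moreover have "\<forall>k'. U i w k' \<longrightarrow> k' \<le> last L"
    using sorted_last_max[OF sL] unfolding L_def by (auto simp: U_def)
  ultimately show ?thesis using w' by blast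
qed

lemma f_word_exists:
  assumes "U i w k"
  shows "\<exists>k0. U i w k0 \<and> (\<forall>k'. U i w k' \<longrightarrow> k' \<le> k0) \<and> f_word i w = Some (w[k0 := Suc i])"
proof -
  define L where "L = filter (\<lambda>k. U i w k) [0..<length w]"
  have "k \<in> set L" using assms unfolding L_def by (auto simp: U_def)
  then have L: "L \<noteq> []" by auto
  then have w': "f_word i w = Some (w[last L := Suc i])" unfolding f_word_def unbr0 L_def[symmetric]
    by (cases L) auto
  have sL: "sorted L" unfolding L_def by (simp add: sorted_filter[where f=id, simplified])
  have "last L \<in> set L" using L by simp
  then have "U i w (last L)" unfolding L_def by simp
  moreover have "\<forall>k'. U i w k' \<longrightarrow> k' \<le> last L"
    using sorted_last_max[OF sL] unfolding L_def by (auto simp: U_def)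
  ultimately show ?thesis using w' by blast
qed

lemma f_word_None: "f_word i w = None \<Longrightarrow> \<not> U i w k"
  using f_word_exists by fastforce



lemma Pw_Suc: "t < length w \<Longrightarrow> Pw i w (Suc t) = Pw i w t + wt i (w ! t)"
  by (simp add: Pw_def take_Suc_conv_app_nth)

lemma Pw_update:
  assumes "x < length w" "w ! x = i" "t \<le> length w"
  shows "Pw i (w[x := Suc i]) t = (if t \<le> x then Pw i w t else Pw i w t + 2)"
  using assms(3)
proof (induction t)
  case 0 then show ?case by simp
next
  case (Suc t)
  then have t: "t < length w" by simp
  have "Pw i (w[x := Suc i]) (Suc t) = Pw i (w[x := Suc i]) t + wt i (w[x := Suc i] ! t)"
    using Pw_Suc[of t "w[x := Suc i]"] t by simp
  also have "\<dots> = (if Suc t \<le> x then Pw i w (Suc t) else Pw i w (Suc t) + 2)"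
    using Suc t assms Pw_Suc[OF t, of i] by (auto simp: wt_def nth_list_update)
  finally show ?case .
qed

lemma K1:
  assumes U: "U i w x" and mx: "\<forall>k'. U i w k' \<longrightarrow> k' \<le> x" and s: "s \<le> length w"
  shows "\<forall>s'. Suc x \<le> s' \<and> s' \<le> s \<longrightarrow> Pw i w (Suc x) \<le> Pw i w s'"
  using s
proof (induction s)
  case 0 then show ?case by simp
next
  case (Suc s)
  then have IH: "\<forall>s'. Suc x \<le> s' \<and> s' \<le> s \<longrightarrow> Pw i w (Suc x) \<le> Pw i w s'"
    and sL: "s < length w" by auto
  have xL: "x < length w" and wx: "w ! x = i" and Ux: "\<forall>q\<le>x. Pw i w x \<le> Pw i w q"
    using U by (auto simp: U_def)
  have Px: "Pw i w (Suc x) = Pw i w x - 1" using Pw_Suc[OF xL, of i] wx by (simp add: wt_def)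
  have "Pw i w (Suc x) \<le> Pw i w (Suc s)" if ss: "Suc x \<le> s"
  proof (rule ccontr)
    assume neg: "\<not> ?thesis"
    have h1: "Pw i w (Suc x) \<le> Pw i w s" using IH ss by auto
    have ps: "Pw i w (Suc s) = Pw i w s + wt i (w ! s)" using Pw_Suc[OF sL] .
    have wts: "wt i (w ! s) \<ge> -1" by (simp add: wt_def)
    have ws: "w ! s = i" using neg h1 ps by (auto simp: wt_def split: if_splits)
    have eq: "Pw i w s = Pw i w (Suc x)" using neg h1 ps wts by linarith
    have "U i w s"
      unfolding U_def
    proof (intro conjI allI impI)
      show "s < length w" by (rule sL)
      show "w ! s = i" by (rule ws)
      fix q assume q: "q \<le> s"
      show "Pw i w s \<le> Pw i w q"
      proof (cases "q \<le> x")
        case True then show ?thesis using Ux eq Px by fastforce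
      next
        case False then show ?thesis using IH q eq by auto
      qed
    qed
    then show False using mx ss by fastforce
  qed
  then show ?case using IH by (metis le_SucE order_refl)
qed

definition rc :: "nat \<Rightarrow> nat list \<Rightarrow> nat list" where
  "rc n w = rev (map (\<lambda>v. Suc n - v) w)"

lemma wt_rc: "1 \<le> i \<Longrightarrow> i < n \<Longrightarrow> u \<le> n \<Longrightarrow> wt (n - i) (Suc n - u) = - wt i u"
  by (auto simp: wt_def)

lemma Pw_rc:
  assumes "1 \<le> i" "i < n" "\<forall>u\<in>set w. u \<le> n" "q \<le> length w"
  shows "Pw (n - i) (rc n w) q = Pw i w (length w - q) - Pw i w (length w)"
proof -
  have "take q (rc n w) = rev (drop (length w - q) (map (\<lambda>v. Suc n - v) w))"
    unfolding rc_def by (simp add: take_rev)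
  then have "Pw (n - i) (rc n w) q = sum_list (map (\<lambda>u. wt (n - i) (Suc n - u)) (drop (length w - q) w))"
    unfolding Pw_def by (simp add: rev_map[symmetric] sum_list_rev drop_map comp_def)
  also have "\<dots> = sum_list (map (\<lambda>u. - wt i u) (drop (length w - q) w))"
    using assms(1,2,3) set_drop_subset[of "length w - q" w]
    by (intro arg_cong[where f=sum_list] map_cong) (auto simp: wt_rc)
  also have "\<dots> = - sum_list (map (wt i) (drop (length w - q) w))"
    by (simp add: uminus_sum_list_map comp_def)
  also have "\<dots> = Pw i w (length w - q) - Pw i w (length w)"
  proof -
    have "sum_list (map (wt i) (take (length w - q) w)) + sum_list (map (wt i) (drop (length w - q) w))
        = sum_list (map (wt i) w)"
      by (metis append_take_drop_id map_append sum_list_append)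
    then show ?thesis unfolding Pw_def by simp
  qed
  finally show ?thesis .
qed

lemma rc_nth: "t < length w \<Longrightarrow> rc n w ! t = Suc n - w ! (length w - Suc t)"
  by (simp add: rc_def rev_nth)

lemma length_rc[simp]: "length (rc n w) = length w"
  by (simp add: rc_def)

lemma f_rc:
  assumes f: "f_word i w = Some w'" and i: "1 \<le> i" "i < n" and wn: "\<forall>u\<in>set w. u \<le> n"
  shows "f_word (n - i) (rc n w') = Some (rc n w)"
proof -
  obtain x where Ux: "U i w x" and mx: "\<forall>k'. U i w k' \<longrightarrow> k' \<le> x" and w': "w' = w[x := Suc i]"
    using f_word_Some[OF f] by blast
  define L where "L = length w"
  have xL: "x < L" and wx: "w ! x = i" and Uxq: "\<forall>q\<le>x. Pw i w x \<le> Pw i w q"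
    using Ux by (auto simp: U_def L_def)
  have lw': "length w' = L" using w' L_def by simp
  have wn': "\<forall>u\<in>set w'. u \<le> n" using wn i w' set_update_subset_insert[of w x "Suc i"] by auto
  have Pr: "Pw (n - i) (rc n w') q = Pw i w' (L - q) - Pw i w' L" if "q \<le> L" for q
    using Pw_rc[OF i wn', of q] that lw' by simp
  have Pu: "Pw i w' t = (if t \<le> x then Pw i w t else Pw i w t + 2)" if "t \<le> L" for t
    using Pw_update[of x w i t] xL wx that w' L_def by simp
  have K: "\<forall>s'. Suc x \<le> s' \<and> s' \<le> L \<longrightarrow> Pw i w (Suc x) \<le> Pw i w s'"
    using K1[OF Ux mx, of L] L_def by simp
  have A: "U (n - i) (rc n w') (L - Suc x)"
    unfolding U_def
  proof (intro conjI allI impI)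
    show "L - Suc x < length (rc n w')" using xL lw' by simp
    show "rc n w' ! (L - Suc x) = n - i"
      using rc_nth[of "L - Suc x" w' n] xL lw' w' i by simp
    fix q assume q: "q \<le> L - Suc x"
    have "Pw i w' (L - (L - Suc x)) \<le> Pw i w' (L - q)"
      using K q xL Pu by auto
    then show "Pw (n - i) (rc n w') (L - Suc x) \<le> Pw (n - i) (rc n w') q"
      using Pr q xL by simp
  qed
  have B: "t \<le> L - Suc x" if Ut: "U (n - i) (rc n w') t" for t
  proof (rule ccontr)
    assume "\<not> ?thesis"
    then have tx: "L - Suc x < t" by simp
    have tL: "t < L" and rt: "rc n w' ! t = n - i" and Ut2: "\<forall>q\<le>t. Pw (n - i) (rc n w') t \<le> Pw (n - i) (rc n w') q"
      using Ut lw' by (auto simp: U_def)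
    define y where "y = L - Suc t"
    have yx: "y < x" using tx tL y_def by simp
    have "w' ! y \<le> n" using wn' tL y_def lw' by auto
    then have w'y: "w' ! y = Suc i" using rt rc_nth[of t w' n] tL lw' y_def i by simp
    then have wy: "w ! y = Suc i" using w' yx by simp
    have "Pw (n - i) (rc n w') t \<le> Pw (n - i) (rc n w') (L - x)" using Ut2 tx by simp
    then have "Pw i w' (L - t) \<le> Pw i w' x" using Pr tL xL by simp
    then have "Pw i w' (Suc y) \<le> Pw i w' x" using y_def tL by (simp add: Suc_diff_Suc)
    then have "Pw i w (Suc y) \<le> Pw i w x" using Pu yx xL by simp
    moreover have "Pw i w (Suc y) = Pw i w y + 1" using Pw_Suc[of y w i] yx xL L_def wy by (simp add: wt_def)
    moreover have "Pw i w x \<le> Pw i w y" using Uxq yx by simp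
    ultimately show False by simp
  qed
  obtain k0 where U0: "U (n - i) (rc n w') k0" and m0: "\<forall>k'. U (n - i) (rc n w') k' \<longrightarrow> k' \<le> k0"
    and fe: "f_word (n - i) (rc n w') = Some ((rc n w')[k0 := Suc (n - i)])"
    using f_word_exists[OF A] by blast
  have k0: "k0 = L - Suc x" using B[OF U0] m0 A by (simp add: le_antisym)
  have "(rc n w')[L - Suc x := Suc (n - i)] = rc n w"
  proof (rule nth_equalityI)
    show "length ((rc n w')[L - Suc x := Suc (n - i)]) = length (rc n w)" using lw' L_def by simp
    fix t assume "t < length ((rc n w')[L - Suc x := Suc (n - i)])"
    then have tL: "t < L" using lw' by simp
    show "(rc n w')[L - Suc x := Suc (n - i)] ! t = rc n w ! t"
    proof (cases "t = L - Suc x")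
      case True then show ?thesis using rc_nth[of t w n] tL L_def wx xL i lw' by simp
    next
      case False
      then have "L - Suc t \<noteq> x" using tL xL by simp
      then show ?thesis using rc_nth[of t w n] rc_nth[of t w' n] tL L_def lw' w' False by simp
    qed
  qed
  then show ?thesis using fe k0 by simp
qed



lemma map_upd_cl: "k < length (cell_list la) \<Longrightarrow>
   map (b(cell_list la ! k := v)) (cell_list la) = (map b (cell_list la))[k := v]"
  by (rule nth_equalityI) (auto simp: nth_list_update distinct_cell_list nth_eq_iff_index_eq)

lemma SSYT_out: "b \<in> SSYT la n \<Longrightarrow> p \<notin> cells la \<Longrightarrow> b p = 0"
  unfolding SSYT_def by blast

lemma crystal_step:
  assumes b: "b \<in> SSYT la n" and b': "b' \<in> SSYT la n" and cf: "crystal_f la i b b'"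
  shows "\<exists>k. k < sum_list la \<and> U i (row_word la b) k \<and> (\<forall>k'. U i (row_word la b) k' \<longrightarrow> k' \<le> k)
     \<and> b' = b(cell_list la ! k := Suc i)"
proof -
  obtain k where Uk: "U i (row_word la b) k" and mk: "\<forall>k'. U i (row_word la b) k' \<longrightarrow> k' \<le> k"
    and w': "row_word la b' = (row_word la b)[k := Suc i]"
    using f_word_Some cf unfolding crystal_f_def by blast
  have kN: "k < sum_list la" using Uk by (simp add: U_def row_word_cl length_cell_list)
  have "map b' (cell_list la) = map (b(cell_list la ! k := Suc i)) (cell_list la)"
    using w' map_upd_cl[of k la b "Suc i"] kN length_cell_list by (simp add: row_word_cl)
  then have on: "\<forall>p\<in>cells la. b' p = (b(cell_list la ! k := Suc i)) p"
    by (simp add: set_cell_list[symmetric])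
  have xin: "cell_list la ! k \<in> cells la" using cl_in kN by blast
  have "b' = b(cell_list la ! k := Suc i)"
  proof
    fix p show "b' p = (b(cell_list la ! k := Suc i)) p"
      using on SSYT_out[OF b, of p] SSYT_out[OF b', of p] xin by (cases "p \<in> cells la") auto
  qed
  then show ?thesis using kN Uk mk by blast
qed

lemma Pw_cells: "t \<le> sum_list la \<Longrightarrow>
   Pw i (row_word la b) t = (\<Sum>s<t. wt i (b (cell_list la ! s)))"
proof (induction t)
  case 0 then show ?case by simp
next
  case (Suc t)
  then have "t < length (row_word la b)" by (simp add: row_word_cl length_cell_list)
  then show ?case using Suc Pw_Suc[of t "row_word la b" i] by (simp add: row_word_cl)
qed

lemma Pw_seg: "k0 \<le> k \<Longrightarrow> k \<le> sum_list la \<Longrightarrow>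
   Pw i (row_word la b) k - Pw i (row_word la b) k0 = (\<Sum>p\<in>(\<lambda>s. cell_list la ! s) ` {k0..<k}. wt i (b p))"
proof -
  assume a: "k0 \<le> k" "k \<le> sum_list la"
  have "(\<Sum>s<k. wt i (b (cell_list la ! s))) = (\<Sum>s<k0. wt i (b (cell_list la ! s))) + (\<Sum>s\<in>{k0..<k}. wt i (b (cell_list la ! s)))"
    using a by (metis atLeast0LessThan sum.atLeastLessThan_concat le0)
  moreover have "inj_on (\<lambda>s. cell_list la ! s) {k0..<k}"
    using a cl_inj[of _ la] by (intro inj_onI) (meson atLeastLessThan_iff order_less_le_trans)
  then have "(\<Sum>p\<in>(\<lambda>s. cell_list la ! s) ` {k0..<k}. wt i (b p)) = (\<Sum>s\<in>{k0..<k}. wt i (b (cell_list la ! s)))"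
    by (simp add: sum.reindex)
  ultimately show ?thesis using a Pw_cells[of k la i b] Pw_cells[of k0 la i b] by simp
qed

lemma row_mono: "b \<in> SSYT la n \<Longrightarrow> (r, c2) \<in> cells la \<Longrightarrow> c1 \<le> c2 \<Longrightarrow> b (r, c1) \<le> b (r, c2)"
proof (induction c2)
  case 0 then show ?case by simp
next
  case (Suc c2)
  show ?case
  proof (cases "c1 = Suc c2")
    case True then show ?thesis by simp
  next
    case False
    then have "c1 \<le> c2" using Suc by simp
    moreover have "(r, c2) \<in> cells la" using Suc.prems by (auto simp: cells_def)
    ultimately have "b (r, c1) \<le> b (r, c2)" using Suc by blast
    also have "\<dots> \<le> b (r, Suc c2)" using Suc.prems by (auto simp: SSYT_def)
    finally show ?thesis .
  qed
qed

lemma next_index: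
  assumes k: "k < sum_list la" and x: "cell_list la ! k = (r, c)" and h: "(r, Suc c) \<in> cells la"
  shows "Suc k < sum_list la \<and> cell_list la ! Suc k = (r, Suc c)"
proof -
  obtain s where s: "s < sum_list la" "cell_list la ! s = (r, Suc c)" using cl_index[OF h] by blast
  have "read_before (r, c) (r, Suc c)" by (simp add: read_before_def)
  then have ks: "k < s" using cl_read_iff[of k la s] k s x length_cell_list by simp
  have "s = Suc k"
  proof (rule ccontr)
    assume "s \<noteq> Suc k"
    then have "Suc k < s" using ks by simp
    then have "read_before (cell_list la ! k) (cell_list la ! Suc k)"
      and "read_before (cell_list la ! Suc k) (cell_list la ! s)"
      using cl_read_iff[of _ la] s length_cell_list by (metis Suc_lessD lessI order.strict_trans)+
    then show False using x s by (auto simp: read_before_def)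
  qed
  then show ?thesis using s by simp
qed



lemma U_val: "U i (row_word la b) k \<Longrightarrow> k < sum_list la \<and> b (cell_list la ! k) = i"
  unfolding U_def row_word_cl by (metis length_cell_list length_map nth_map)

lemma col_contra:
  assumes b: "b \<in> SSYT la n" and k: "k < sum_list la" and x: "cell_list la ! k = (r, c)"
    and Uk: "U i (row_word la b) k" and up: "(Suc r, c) \<in> cells la" and bu: "b (Suc r, c) = Suc i"
  shows False
proof -
  have bx: "b (r, c) = i" using U_val[OF Uk] x by simp
  have xc: "(r, c) \<in> cells la" using cl_in[OF k] x by simp
  define a where "a = (LEAST a. b (r, a) = i)"
  have ac: "a \<le> c" unfolding a_def using bx by (rule Least_le)
  have bra: "b (r, a) = i" unfolding a_def using bx by (rule LeastI)
  have lowa: "a' < a \<Longrightarrow> b (r, a') \<noteq> i" for a' unfolding a_def by (rule not_less_Least)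
  have below: "a' < a \<Longrightarrow> b (r, a') < i" for a'
    using lowa[of a'] row_mono[OF b xc, of a'] ac bx by fastforce
  have mid: "a \<le> a' \<Longrightarrow> a' \<le> c \<Longrightarrow> b (r, a') = i" for a'
  proof -
    assume h: "a \<le> a'" "a' \<le> c"
    then have "(r, a') \<in> cells la" using xc by (auto simp: cells_def)
    then have "b (r, a) \<le> b (r, a')" using row_mono[OF b] h by blast
    moreover have "b (r, a') \<le> b (r, c)" using row_mono[OF b xc] h by blast
    ultimately show ?thesis using bra bx by simp
  qed
  have upc: "a \<le> a' \<Longrightarrow> a' \<le> c \<Longrightarrow> b (Suc r, a') = Suc i" for a'
  proof -
    assume h: "a \<le> a'" "a' \<le> c"
    then have c1: "(Suc r, a') \<in> cells la" using up by (auto simp: cells_def)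
    then have "b (r, a') < b (Suc r, a')" using b by (auto simp: SSYT_def)
    moreover have "b (Suc r, a') \<le> b (Suc r, c)" using row_mono[OF b up] h by blast
    ultimately show ?thesis using mid[OF h] bu by simp
  qed
  have upg: "a \<le> a' \<Longrightarrow> (Suc r, a') \<in> cells la \<Longrightarrow> b (Suc r, a') \<ge> Suc i" for a'
    using row_mono[OF b, of "Suc r" a' a] upc[of a] ac by auto
  obtain k0 where k0: "k0 < sum_list la" "cell_list la ! k0 = (Suc r, a)"
    using cl_index[of "(Suc r, a)" la] up ac by (auto simp: cells_def)
  have "read_before (Suc r, a) (r, c)" by (simp add: read_before_def)
  then have k0k: "k0 < k" using cl_read_iff[of k0 la k] k0 k x length_cell_list by simp
  have "Pw i (row_word la b) k \<le> Pw i (row_word la b) k0" using Uk k0k by (simp add: U_def)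
  then have neg: "(\<Sum>p\<in>(\<lambda>s. cell_list la ! s) ` {k0..<k}. wt i (b p)) \<le> 0"
    using Pw_seg[of k0 k la i b] k0k k by simp
  define M where "M = la ! Suc r"
  have cM: "c < M" using up by (simp add: cells_def M_def)
  have C: "(\<lambda>s. cell_list la ! s) ` {k0..<k} = Pair (Suc r) ` {a..<M} \<union> Pair r ` {0..<c}"
  proof
    show "(\<lambda>s. cell_list la ! s) ` {k0..<k} \<subseteq> Pair (Suc r) ` {a..<M} \<union> Pair r ` {0..<c}"
    proof
      fix p assume "p \<in> (\<lambda>s. cell_list la ! s) ` {k0..<k}"
      then obtain s where s: "k0 \<le> s" "s < k" "p = cell_list la ! s" by auto
      have sN: "s < sum_list la" using s k by simp
      have pc: "p \<in> cells la" using cl_in[OF sN] s by simp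
      have r1: "p = (Suc r, a) \<or> read_before (Suc r, a) p"
        using s k0 cl_read_iff[of k0 la s] sN length_cell_list by (cases "k0 = s") auto
      have r2: "read_before p (r, c)" using s x cl_read_iff[of s la k] sN k length_cell_list by simp
      show "p \<in> Pair (Suc r) ` {a..<M} \<union> Pair r ` {0..<c}"
        using r1 r2 pc by (cases p) (auto simp: read_before_def cells_def M_def)
    qed
  next
    show "Pair (Suc r) ` {a..<M} \<union> Pair r ` {0..<c} \<subseteq> (\<lambda>s. cell_list la ! s) ` {k0..<k}"
    proof
      fix p assume p: "p \<in> Pair (Suc r) ` {a..<M} \<union> Pair r ` {0..<c}"
      then have pc: "p \<in> cells la" using up xc by (auto simp: cells_def M_def)
      obtain s where s: "s < sum_list la" "cell_list la ! s = p" using cl_index[OF pc] by blast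
      have r1: "p = (Suc r, a) \<or> read_before (Suc r, a) p" using p by (auto simp: read_before_def)
      have r2: "read_before p (r, c)" using p by (auto simp: read_before_def)
      have "k0 \<le> s" using r1 cl_read_iff[of k0 la s] k0 s length_cell_list cl_inj[of k0 la s]
        by (metis le_less)
      moreover have "s < k" using r2 cl_read_iff[of s la k] s k x length_cell_list by simp
      ultimately show "p \<in> (\<lambda>s. cell_list la ! s) ` {k0..<k}" using s by auto
    qed
  qed
  have disj: "Pair (Suc r) ` {a..<M} \<inter> Pair r ` {0..<c} = {}" by auto
  have sA: "(\<Sum>p\<in>Pair (Suc r) ` {a..<M}. wt i (b p)) = (\<Sum>a'\<in>{a..<M}. wt i (b (Suc r, a')))"
    by (subst sum.reindex) (auto simp: inj_on_def)
  have sB: "(\<Sum>p\<in>Pair r ` {0..<c}. wt i (b p)) = (\<Sum>a'\<in>{0..<c}. wt i (b (r, a')))"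
    by (subst sum.reindex) (auto simp: inj_on_def)
  have A1: "(\<Sum>a'\<in>{a..<Suc c}. wt i (b (Suc r, a'))) \<le> (\<Sum>a'\<in>{a..<M}. wt i (b (Suc r, a')))"
  proof (rule sum_mono2)
    show "finite {a..<M}" by simp
    show "{a..<Suc c} \<subseteq> {a..<M}" using cM by auto
    fix a' assume "a' \<in> {a..<M} - {a..<Suc c}"
    then have "a \<le> a'" "(Suc r, a') \<in> cells la" using up by (auto simp: cells_def M_def)
    then have "b (Suc r, a') \<ge> Suc i" using upg by blast
    then show "0 \<le> wt i (b (Suc r, a'))" by (simp add: wt_def)
  qed
  have A2: "(\<Sum>a'\<in>{a..<Suc c}. wt i (b (Suc r, a'))) = int (Suc c - a)"
  proof -
    have "(\<Sum>a'\<in>{a..<Suc c}. wt i (b (Suc r, a'))) = (\<Sum>a'\<in>{a..<Suc c}. (1::int))"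
      using upc by (intro sum.cong) (auto simp: wt_def)
    then show ?thesis by simp
  qed
  have B1: "(\<Sum>a'\<in>{0..<c}. wt i (b (r, a'))) = (\<Sum>a'\<in>{0..<a}. wt i (b (r, a'))) + (\<Sum>a'\<in>{a..<c}. wt i (b (r, a')))"
    using ac by (simp add: sum.atLeastLessThan_concat)
  have B2: "(\<Sum>a'\<in>{0..<a}. wt i (b (r, a'))) = 0"
  proof (intro sum.neutral ballI)
    fix a' assume "a' \<in> {0..<a}"
    then have "b (r, a') < i" using below by simp
    then show "wt i (b (r, a')) = 0" by (simp add: wt_def)
  qed
  have B3: "(\<Sum>a'\<in>{a..<c}. wt i (b (r, a'))) = - int (c - a)"
  proof -
    have "(\<Sum>a'\<in>{a..<c}. wt i (b (r, a'))) = (\<Sum>a'\<in>{a..<c}. (-1::int))"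
      using mid by (intro sum.cong) (auto simp: wt_def)
    then show ?thesis by simp
  qed
  have "(\<Sum>p\<in>(\<lambda>s. cell_list la ! s) ` {k0..<k}. wt i (b p))
      = (\<Sum>a'\<in>{a..<M}. wt i (b (Suc r, a'))) + (\<Sum>a'\<in>{0..<c}. wt i (b (r, a')))"
    unfolding C using disj sA sB by (simp add: sum.union_disjoint)
  then have "(\<Sum>p\<in>(\<lambda>s. cell_list la ! s) ` {k0..<k}. wt i (b p)) \<ge> 1"
    using A1 A2 B1 B2 B3 ac by linarith
  then show False using neg by simp
qed

lemma f_SSYT:
  assumes b: "b \<in> SSYT la n" and i: "1 \<le> i" "i < n" and k: "k < sum_list la"
    and Uk: "U i (row_word la b) k" and mk: "\<forall>k'. U i (row_word la b) k' \<longrightarrow> k' \<le> k"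
  shows "b(cell_list la ! k := Suc i) \<in> SSYT la n"
proof -
  obtain r c where x: "cell_list la ! k = (r, c)" by (cases "cell_list la ! k") auto
  have xc: "(r, c) \<in> cells la" using cl_in[OF k] x by simp
  have bx: "b (r, c) = i" using U_val[OF Uk] x by simp
  have right: "b (r, Suc c) \<noteq> i" if h: "(r, Suc c) \<in> cells la"
  proof
    assume e: "b (r, Suc c) = i"
    have nk: "Suc k < sum_list la" "cell_list la ! Suc k = (r, Suc c)" using next_index[OF k x h] by auto
    have "U i (row_word la b) (Suc k)"
      unfolding U_def
    proof (intro conjI allI impI)
      show "Suc k < length (row_word la b)" using nk by (simp add: row_word_cl length_cell_list)
      show "row_word la b ! Suc k = i" using nk e by (simp add: row_word_cl length_cell_list)
      fix q assume q: "q \<le> Suc k"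
      have e1: "Pw i (row_word la b) (Suc k) = Pw i (row_word la b) k - 1"
        using Pw_Suc[of k "row_word la b" i] k x bx by (simp add: row_word_cl length_cell_list wt_def)
      have e2: "\<forall>q\<le>k. Pw i (row_word la b) k \<le> Pw i (row_word la b) q"
        using Uk by (simp add: U_def)
      show "Pw i (row_word la b) (Suc k) \<le> Pw i (row_word la b) q"
      proof (cases "q = Suc k")
        case True then show ?thesis by simp
      next
        case False
        then have "q \<le> k" using q by simp
        then have "Pw i (row_word la b) k \<le> Pw i (row_word la b) q" using e2 by blast
        then show ?thesis using e1 by linarith
      qed
    qed
    then show False using mk by fastforce
  qed
  have up: "b (Suc r, c) \<noteq> Suc i" if h: "(Suc r, c) \<in> cells la"
    using col_contra[OF b k x Uk h] by blast
  show ?thesis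
    unfolding SSYT_def
  proof (intro CollectI conjI allI impI ballI)
    fix p assume "p \<notin> cells la"
    then show "(b(cell_list la ! k := Suc i)) p = 0" using xc x SSYT_out[OF b] by auto
  next
    fix p assume "p \<in> cells la"
    then show "1 \<le> (b(cell_list la ! k := Suc i)) p" "(b(cell_list la ! k := Suc i)) p \<le> n"
      using b i by (auto simp: SSYT_def)
  next
    fix r' c' assume h: "(r', Suc c') \<in> cells la"
    have h0: "(r', c') \<in> cells la" using h by (auto simp: cells_def)
    have base: "b (r', c') \<le> b (r', Suc c')" using b h by (auto simp: SSYT_def)
    show "(b(cell_list la ! k := Suc i)) (r', c') \<le> (b(cell_list la ! k := Suc i)) (r', Suc c')"
    proof (cases "(r', c') = (r, c)")
      case True
      then have "b (r, Suc c) \<ge> i" "b (r, Suc c) \<noteq> i" using base bx right h by auto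
      then show ?thesis using True x by auto
    next
      case False
      then show ?thesis using base x bx by auto
    qed
  next
    fix r' c' assume h: "(Suc r', c') \<in> cells la"
    have base: "b (r', c') < b (Suc r', c')" using b h by (auto simp: SSYT_def)
    show "(b(cell_list la ! k := Suc i)) (r', c') < (b(cell_list la ! k := Suc i)) (Suc r', c')"
    proof (cases "(r', c') = (r, c)")
      case True
      then have "b (Suc r, c) > i" "b (Suc r, c) \<noteq> Suc i" using base bx up h by auto
      then show ?thesis using True x by auto
    next
      case False
      then show ?thesis using base x bx by auto
    qed
  qed
qed



lemma Pw_antimono:
  assumes "\<forall>t<length w. wt i (w ! t) \<le> 0" "q \<le> s" "s \<le> length w"
  shows "Pw i w s \<le> Pw i w q"
  using assms(2,3)
proof (induction s)
  case 0 then show ?case by simp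
next
  case (Suc s)
  show ?case
  proof (cases "q = Suc s")
    case True then show ?thesis by simp
  next
    case False
    then have "Pw i w s \<le> Pw i w q" using Suc by simp
    moreover have "Pw i w (Suc s) = Pw i w s + wt i (w ! s)" using Pw_Suc Suc.prems by simp
    moreover have "wt i (w ! s) \<le> 0" using assms(1) Suc.prems by simp
    ultimately show ?thesis by linarith
  qed
qed

lemma exists_N:
  assumes "is_partition la" "b \<in> SSYT la n" "q' \<in> cells la"
  shows "\<exists>q\<in>cells la. std la b q = sum_list la"
proof -
  have N: "sum_list la \<ge> 1" using assms(3) card_cells finite_cells
    by (metis One_nat_def Suc_leI card_gt_0_iff empty_iff)
  have "sum_list la \<in> std la b ` cells la" using std_bij[of la b] N by (simp add: bij_betw_def)
  then show ?thesis by auto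
qed

lemma edge_Nrow:
  assumes P: "is_partition la" and e: "(T, T') \<in> CS_edges la n" and q': "q' \<in> cells la"
    and T'q: "T' q' = sum_list la"
  shows "\<exists>q\<in>cells la. T q = sum_list la \<and> fst q' \<le> fst q"
proof -
  obtain b b' i where b: "b \<in> SSYT la n" and b': "b' \<in> SSYT la n" and i: "1 \<le> i" "i < n"
    and T: "std la b = T" and T': "std la b' = T'" and cf: "crystal_f la i b b'"
    using e unfolding CS_edges_def by blast
  obtain k where k: "k < sum_list la" and Uk: "U i (row_word la b) k"
    and mk: "\<forall>k'. U i (row_word la b) k' \<longrightarrow> k' \<le> k" and bb': "b' = b(cell_list la ! k := Suc i)"
    using crystal_step[OF b b' cf] by blast
  define x where "x = cell_list la ! k"
  have xc: "x \<in> cells la" using cl_in[OF k] x_def by simp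
  have bx: "b x = i" using U_val[OF Uk] x_def by simp
  have cond: "p = x \<or> read_before p x" if allle: "\<forall>p\<in>cells la. b p \<le> i" and pc: "p \<in> cells la" and bp: "b p = i" for p
  proof (rule ccontr)
    assume neg: "\<not> (p = x \<or> read_before p x)"
    then have rb: "read_before x p" using read_before_total by blast
    obtain s where s: "s < sum_list la" "cell_list la ! s = p" using cl_index[OF pc] by blast
    have ks: "k < s" using rb cl_read_iff[of k la s] k s x_def length_cell_list by simp
    have wt0: "\<forall>t<length (row_word la b). wt i (row_word la b ! t) \<le> 0"
    proof (intro allI impI)
      fix t assume "t < length (row_word la b)"
      then have "t < sum_list la" by (simp add: row_word_cl length_cell_list)
      then have "b (cell_list la ! t) \<le> i" using allle cl_in by blast
      then show "wt i (row_word la b ! t) \<le> 0"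
        using \<open>t < sum_list la\<close> by (simp add: row_word_cl length_cell_list wt_def)
    qed
    have "U i (row_word la b) s"
      unfolding U_def using s bp Pw_antimono[OF wt0]
      by (simp add: row_word_cl length_cell_list)
    then show False using mk ks by fastforce
  qed
  obtain q where qc: "q \<in> cells la" and bq: "std la b q = sum_list la" using exists_N[OF P b q'] by blast
  have qmax: "\<forall>p\<in>cells la. p \<noteq> q \<longrightarrow> ltb b p q" using std_N_iff[OF qc] bq by blast
  have q'max: "\<forall>p\<in>cells la. p \<noteq> q' \<longrightarrow> ltb b' p q'" using std_N_iff[OF q'] T'q T' by blast
  show ?thesis
  proof (cases "q' = x")
    case True
    show ?thesis
    proof (cases "q = x")
      case True then show ?thesis using \<open>q' = x\<close> qc bq T by auto
    next
      case False
      have l1: "ltb b' q x" using q'max qc False True by blast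
      have bqb: "b' q = b q" "b' x = Suc i" using bb' x_def False by auto
      have l2: "ltb b x q" using qmax xc False by auto
      show ?thesis
      proof (cases "b q = Suc i")
        case True
        then have "read_before q x" using l1 bqb unfolding ltb_def by simp
        then have "fst x \<le> fst q" by (auto simp: read_before_def)
        then show ?thesis using qc bq T \<open>q' = x\<close> by auto
      next
        case False
        then have "b q \<le> i" using l1 bqb unfolding ltb_def by simp
        then have bqi: "b q = i" using l2 bx unfolding ltb_def by auto
        have allle: "\<forall>p\<in>cells la. b p \<le> i"
          using qmax bqi unfolding ltb_def by (metis le_refl less_imp_le)
        have "q = x \<or> read_before q x" using cond[OF allle qc bqi] .
        then have "read_before q x" using \<open>q \<noteq> x\<close> by simp
        moreover have "read_before x q" using l2 bqi bx unfolding ltb_def by simp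
        ultimately show ?thesis using read_before_asym by blast
      qed
    qed
  next
    case False
    have "\<forall>p\<in>cells la. p \<noteq> q' \<longrightarrow> ltb b p q'"
    proof (intro ballI impI)
      fix p assume pc: "p \<in> cells la" and pq: "p \<noteq> q'"
      have l: "ltb b' p q'" using q'max pc pq by blast
      show "ltb b p q'"
      proof (cases "p = x")
        case True
        then have "b' p = Suc i" "b' q' = b q'" using bb' x_def False by auto
        then have "Suc i \<le> b q'" using l unfolding ltb_def by auto
        then show ?thesis using True bx unfolding ltb_def by simp
      next
        case False
        then have "b' p = b p" "b' q' = b q'" using bb' x_def \<open>q' \<noteq> x\<close> by auto
        then show ?thesis using l unfolding ltb_def by simp
      qed
    qed
    then have "std la b q' = sum_list la" using std_N_iff[OF q'] by blast
    then show ?thesis using q' T by auto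
  qed
qed

lemma rtrancl_Nrow:
  assumes P: "is_partition la" and e: "(T, T') \<in> (CS_edges la n)\<^sup>*"
  shows "q' \<in> cells la \<Longrightarrow> T' q' = sum_list la \<Longrightarrow> \<exists>q\<in>cells la. T q = sum_list la \<and> fst q' \<le> fst q"
  using e
proof (induction arbitrary: q' rule: rtrancl_induct)
  case base then show ?case by auto
next
  case (step y z)
  obtain q1 where "q1 \<in> cells la" "y q1 = sum_list la" "fst q' \<le> fst q1"
    using edge_Nrow[OF P step.hyps(2) step.prems] by blast
  then show ?case using step.IH by fastforce
qed



lemma nonrect_descent:
  assumes P: "is_partition la" and NR: "\<not> is_rectangle la"
  shows "\<exists>r. Suc r < length la \<and> la ! Suc r < la ! r"
proof (rule ccontr)
  assume "\<not> ?thesis"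
  then have h: "\<forall>r. Suc r < length la \<longrightarrow> la ! r \<le> la ! Suc r" by auto
  have s: "\<forall>r. Suc r < length la \<longrightarrow> la ! Suc r \<le> la ! r"
    using P sorted_wrt_nth_less[of "(\<ge>)" la] by (auto simp: is_partition_def)
  have "r < length la \<longrightarrow> la ! r = la ! 0" for r
  proof (induction r)
    case 0 then show ?case by simp
  next
    case (Suc r)
    then show ?case using h s by (metis Suc_lessD le_antisym)
  qed
  then have "la = replicate (length la) (la ! 0)"
    by (intro nth_equalityI) auto
  then show False using NR unfolding is_rectangle_def by blast
qed

lemma sum_ge_length: "0 \<notin> set la \<Longrightarrow> length la \<le> sum_list la"
  by (induction la) (auto simp: Suc_le_eq)

lemma sum_ge: "0 \<notin> set la \<Longrightarrow> r < length la \<Longrightarrow> length la + la ! r \<le> sum_list la + 1"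
proof (induction la arbitrary: r)
  case Nil then show ?case by simp
next
  case (Cons x xs)
  show ?case
  proof (cases r)
    case 0 then show ?thesis using sum_ge_length[of xs] Cons.prems by simp
  next
    case (Suc r')
    then have "length xs + xs ! r' \<le> sum_list xs + 1" using Cons by simp
    moreover have "x \<ge> 1" using Cons.prems by (cases x) auto
    ultimately show ?thesis using Suc by simp
  qed
qed

lemma nonrect:
  assumes P: "is_partition la" and Nn: "sum_list la \<le> n" and NR: "\<not> is_rectangle la"
  shows "\<not> strongly_connected_on (SYT la) (CS_edges la n)"
proof
  assume SC: "strongly_connected_on (SYT la) (CS_edges la n)"
  obtain r where r: "Suc r < length la" "la ! Suc r < la ! r" using nonrect_descent[OF P NR] by blast
  define l where "l = length la"
  have nz: "0 \<notin> set la" using P by (simp add: is_partition_def)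
  have lr1: "la ! Suc r \<ge> 1" using nz r(1) nth_mem[of "Suc r" la] by (cases "la ! Suc r") auto
  have lr: "la ! r \<ge> 2" using lr1 r(2) by simp
  have "la ! (l - 1) \<in> set la" using r(1) l_def by simp
  then have ll: "la ! (l - 1) \<ge> 1" using nz by (metis less_one not_le)
  have Nl: "l + 1 \<le> sum_list la" using sum_ge[OF nz, of r] r lr l_def by simp
  define corner where "corner = (r, la ! r - 1)"
  have cc: "corner \<in> cells la" using r lr by (simp add: corner_def cells_def)
  define bu where "bu = (\<lambda>p. if p \<in> cells la then Suc (fst p) else 0)"
  define bc where "bc = bu(corner := Suc l)"
  have fstl: "p \<in> cells la \<Longrightarrow> fst p < l" for p by (auto simp: cells_def l_def)
  have buS: "bu \<in> SSYT la n"
    unfolding SSYT_def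
  proof (intro CollectI conjI allI impI ballI)
    fix p assume "p \<notin> cells la" then show "bu p = 0" by (simp add: bu_def)
  next
    fix p assume "p \<in> cells la" then show "1 \<le> bu p" "bu p \<le> n"
      using fstl[of p] Nl Nn by (auto simp: bu_def)
  next
    fix r' c' assume h: "(r', Suc c') \<in> cells la"
    then have "(r', c') \<in> cells la" by (auto simp: cells_def)
    then show "bu (r', c') \<le> bu (r', Suc c')" using h by (simp add: bu_def)
  next
    fix r' c' assume h: "(Suc r', c') \<in> cells la"
    then have "(r', c') \<in> cells la" using cell_below[OF P] by blast
    then show "bu (r', c') < bu (Suc r', c')" using h by (simp add: bu_def)
  qed
  have bcS: "bc \<in> SSYT la n"
    unfolding SSYT_def
  proof (intro CollectI conjI allI impI ballI)
    fix p assume "p \<notin> cells la" then show "bc p = 0" using cc by (auto simp: bu_def bc_def)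
  next
    fix p assume "p \<in> cells la" then show "1 \<le> bc p" "bc p \<le> n"
      using fstl[of p] Nl Nn by (auto simp: bu_def bc_def)
  next
    fix r' c' assume h: "(r', Suc c') \<in> cells la"
    then have h0: "(r', c') \<in> cells la" by (auto simp: cells_def)
    have nc: "(r', c') \<noteq> corner" using h by (auto simp: corner_def cells_def)
    show "bc (r', c') \<le> bc (r', Suc c')"
      using h h0 nc fstl[of "(r', c')"] by (auto simp: bu_def bc_def)
  next
    fix r' c' assume h: "(Suc r', c') \<in> cells la"
    then have h0: "(r', c') \<in> cells la" using cell_below[OF P] by blast
    have nc: "(r', c') \<noteq> corner" using h r by (auto simp: corner_def cells_def)
    show "bc (r', c') < bc (Suc r', c')"
      using h h0 nc fstl[of "(Suc r', c')"] by (auto simp: bu_def bc_def)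
  qed
  have T1: "std la bc \<in> SYT la" using std_SYT[OF P bcS] .
  have T2: "std la bu \<in> SYT la" using std_SYT[OF P buS] .
  have path: "(std la bc, std la bu) \<in> (CS_edges la n)\<^sup>*"
    using SC T1 T2 unfolding strongly_connected_on_def by blast
  obtain q' where q': "q' \<in> cells la" "std la bu q' = sum_list la" using exists_N[OF P buS cc] by blast
  have q'max: "\<forall>p\<in>cells la. p \<noteq> q' \<longrightarrow> ltb bu p q'" using std_N_iff[OF q'(1)] q'(2) by blast
  have p0: "(l - 1, 0) \<in> cells la" using ll r(1) l_def by (auto simp: cells_def)
  have fq': "l - 1 \<le> fst q'"
  proof (cases "q' = (l - 1, 0)")
    case True then show ?thesis by simp
  next
    case False
    then have "ltb bu (l - 1, 0) q'" using q'max p0 by auto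
    then have "bu (l - 1, 0) \<le> bu q'" unfolding ltb_def by auto
    then show ?thesis using p0 q'(1) by (simp add: bu_def)
  qed
  obtain q where q: "q \<in> cells la" "std la bc q = sum_list la" "fst q' \<le> fst q"
    using rtrancl_Nrow[OF P path q'] by blast
  have qmax: "\<forall>p\<in>cells la. p \<noteq> q \<longrightarrow> ltb bc p q" using std_N_iff[OF q(1)] q(2) by blast
  have "q = corner"
  proof (rule ccontr)
    assume "q \<noteq> corner"
    then have "ltb bc corner q" using qmax cc by auto
    then have "bc corner \<le> bc q" unfolding ltb_def by auto
    then show False using \<open>q \<noteq> corner\<close> q(1) fstl[of q] by (simp add: bc_def bu_def)
  qed
  then show False using q(3) fq' r(1) l_def by (simp add: corner_def)
qed



lemma cells_rect: "p \<in> cells (replicate L W) \<longleftrightarrow> fst p < L \<and> snd p < W"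
  by (cases p) (auto simp: cells_def)

lemma sum_rect: "sum_list (replicate L W) = L * W"
  by (simp add: sum_list_replicate)

definition rot :: "nat \<Rightarrow> nat \<Rightarrow> nat \<times> nat \<Rightarrow> nat \<times> nat" where
  "rot L W p = (L - Suc (fst p), W - Suc (snd p))"

definition star :: "nat \<Rightarrow> nat \<Rightarrow> nat \<Rightarrow> ((nat \<times> nat) \<Rightarrow> nat) \<Rightarrow> ((nat \<times> nat) \<Rightarrow> nat)" where
  "star L W n b p = (if fst p < L \<and> snd p < W then Suc n - b (rot L W p) else 0)"

lemma rot_in: "fst p < L \<and> snd p < W \<Longrightarrow> fst (rot L W p) < L \<and> snd (rot L W p) < W"
  by (simp add: rot_def)

lemma rot_rot: "fst p < L \<and> snd p < W \<Longrightarrow> rot L W (rot L W p) = p"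
  by (cases p) (simp add: rot_def)

lemma SYT_SSYT: "T \<in> SYT la \<Longrightarrow> sum_list la \<le> n \<Longrightarrow> T \<in> SSYT la n"
proof -
  assume T: "T \<in> SYT la" and Nn: "sum_list la \<le> n"
  have bij: "bij_betw T (cells la) {1..sum_list la}" using T by (simp add: SYT_def)
  have v: "p \<in> cells la \<Longrightarrow> 1 \<le> T p \<and> T p \<le> n" for p
    using bij_betwE[OF bij] Nn by fastforce
  show ?thesis using T v unfolding SYT_def SSYT_def by (auto simp: less_imp_le)
qed

lemma std_SYT_id: "T \<in> SYT la \<Longrightarrow> std la T = T"
proof
  fix q assume T: "T \<in> SYT la"
  have bij: "bij_betw T (cells la) {1..sum_list la}" using T by (simp add: SYT_def)
  have inj: "inj_on T (cells la)" using bij by (simp add: bij_betw_def)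
  show "std la T q = T q"
  proof (cases "q \<in> cells la")
    case False
    have "T q = 0" using T False unfolding SYT_def by blast
    then show ?thesis using False by (simp add: std_def)
  next
    case True
    have e: "{p \<in> cells la. ltb T p q} = {p \<in> cells la. T p < T q}"
      using inj True unfolding ltb_def by (auto simp: read_before_def inj_on_def)
    have "T ` {p \<in> cells la. T p < T q} = {1..<T q}"
    proof
      show "T ` {p \<in> cells la. T p < T q} \<subseteq> {1..<T q}" using bij_betwE[OF bij] by auto
      show "{1..<T q} \<subseteq> T ` {p \<in> cells la. T p < T q}"
      proof
        fix v assume v: "v \<in> {1..<T q}"
        have "T q \<le> sum_list la" using bij_betwE[OF bij] True by auto
        then have "v \<in> T ` cells la" using v bij by (auto simp: bij_betw_def)
        then show "v \<in> T ` {p \<in> cells la. T p < T q}" using v by auto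
      qed
    qed
    then have "card {p \<in> cells la. T p < T q} = T q - 1"
      using card_image[of T "{p \<in> cells la. T p < T q}"] inj by (simp add: inj_on_subset)
    moreover have "T q \<ge> 1" using bij_betwE[OF bij] True by auto
    ultimately show ?thesis using std_eq[OF True, of T] e by simp
  qed
qed

lemma std_cong:
  assumes "\<forall>p\<in>cells la. \<forall>q\<in>cells la. (b1 p < b1 q \<longleftrightarrow> b2 p < b2 q) \<and> (b1 p = b1 q \<longleftrightarrow> b2 p = b2 q)"
  shows "std la b1 = std la b2"
proof
  fix q show "std la b1 q = std la b2 q"
  proof (cases "q \<in> cells la")
    case False then show ?thesis by (simp add: std_def)
  next
    case True
    have "{p \<in> cells la. ltb b1 p q} = {p \<in> cells la. ltb b2 p q}"
      using assms True unfolding ltb_def by auto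
    then show ?thesis using std_eq[OF True] by simp
  qed
qed



definition phi :: "nat \<Rightarrow> nat \<Rightarrow> nat \<Rightarrow> ((nat \<times> nat) \<Rightarrow> nat) \<Rightarrow> ((nat \<times> nat) \<Rightarrow> nat)" where
  "phi L W N T p = (if fst p < L \<and> snd p < W then Suc N - T (rot L W p) else 0)"

lemma star_SSYT:
  assumes la: "la = replicate L W" and b: "b \<in> SSYT la n"
  shows "star L W n b \<in> SSYT la n"
  unfolding SSYT_def
proof (intro CollectI conjI allI impI ballI)
  have bv: "fst p < L \<Longrightarrow> snd p < W \<Longrightarrow> 1 \<le> b p \<and> b p \<le> n" for p
    using b la cells_rect unfolding SSYT_def by blast
  fix p assume "p \<notin> cells la" then show "star L W n b p = 0" using la cells_rect[of p L W] by (auto simp: star_def)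
next
  have bv: "fst p < L \<Longrightarrow> snd p < W \<Longrightarrow> 1 \<le> b p \<and> b p \<le> n" for p
    using b la cells_rect unfolding SSYT_def by blast
  fix p assume p: "p \<in> cells la"
  then have "fst p < L \<and> snd p < W" using la cells_rect by blast
  then show "1 \<le> star L W n b p" "star L W n b p \<le> n"
    using bv[of "rot L W p"] rot_in[of p L W] by (auto simp: star_def)
next
  have bv: "fst p < L \<Longrightarrow> snd p < W \<Longrightarrow> 1 \<le> b p \<and> b p \<le> n" for p
    using b la cells_rect unfolding SSYT_def by blast
  fix r c assume h: "(r, Suc c) \<in> cells la"
  then have h': "r < L" "Suc c < W" using la cells_rect by auto
  define c0 where "c0 = W - Suc (Suc c)"
  have e: "W - Suc c = Suc c0" using h' c0_def by simp
  have "(L - Suc r, Suc c0) \<in> cells la" using h' la cells_rect e by auto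
  then have "b (L - Suc r, c0) \<le> b (L - Suc r, Suc c0)" using b by (auto simp: SSYT_def)
  then show "star L W n b (r, c) \<le> star L W n b (r, Suc c)"
    using h' e c0_def diff_le_mono2 by (simp add: star_def rot_def)
next
  have bv: "fst p < L \<Longrightarrow> snd p < W \<Longrightarrow> 1 \<le> b p \<and> b p \<le> n" for p
    using b la cells_rect unfolding SSYT_def by blast
  fix r c assume h: "(Suc r, c) \<in> cells la"
  then have h': "Suc r < L" "c < W" using la cells_rect by auto
  define r0 where "r0 = L - Suc (Suc r)"
  have e: "L - Suc r = Suc r0" using h' r0_def by simp
  have "(Suc r0, W - Suc c) \<in> cells la" using h' la cells_rect e by auto
  then have lt: "b (r0, W - Suc c) < b (Suc r0, W - Suc c)" using b by (auto simp: SSYT_def)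
  have "b (Suc r0, W - Suc c) \<le> n" using bv[of "(Suc r0, W - Suc c)"] h' e by simp
  then show "star L W n b (r, c) < star L W n b (Suc r, c)"
  proof -
    have "Suc n - b (Suc r0, W - Suc c) < Suc n - b (r0, W - Suc c)"
      using lt \<open>b (Suc r0, W - Suc c) \<le> n\<close> by linarith
    then show ?thesis using h' e r0_def by (simp add: star_def rot_def)
  qed
qed

lemma rev_map_upt: "rev (map f [0..<m]) = map (\<lambda>i. f (m - Suc i)) [0..<m]"
  by (rule nth_equalityI) (auto simp: rev_nth)

lemma row_word_star:
  assumes la: "la = replicate L W"
  shows "row_word la (star L W n b) = rc n (row_word la b)"
proof -
  define R where "R = (\<lambda>(b::(nat \<times> nat) \<Rightarrow> nat) (r::nat). map (\<lambda>c. b (r, c)) [0..<W])"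
  define g where "g = (\<lambda>v::nat. Suc n - v)"
  have rw: "row_word la b' = concat (map (R b') (rev [0..<L]))" for b'
    unfolding row_word_def R_def la by (intro arg_cong[where f=concat] map_cong) auto
  have Rs: "R (star L W n b) r = map g (rev (R b (L - Suc r)))" if "r < L" for r
    unfolding R_def rev_map_upt using that by (simp add: star_def rot_def g_def)
  have "row_word la (star L W n b) = concat (map (\<lambda>r. map g (rev (R b (L - Suc r)))) (rev [0..<L]))"
    unfolding rw using Rs by (intro arg_cong[where f=concat] map_cong) auto
  also have "\<dots> = concat (map (\<lambda>r. map g (rev (R b r))) [0..<L])"
    apply (simp add: rev_map[symmetric] rev_map_upt comp_def)
    apply (intro arg_cong[where f=concat] map_cong)
     apply auto
    done
  also have "\<dots> = rc n (row_word la b)"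
    unfolding rc_def rw g_def[symmetric]
    by (simp add: rev_concat map_concat rev_map comp_def)
  finally show ?thesis .
qed



lemma inR: "la = replicate L W \<Longrightarrow> p \<in> cells la \<longleftrightarrow> fst p < L \<and> snd p < W"
  by (simp add: cells_rect)

lemma std_star:
  assumes la: "la = replicate L W" and b: "b \<in> SSYT la n"
  shows "std la (star L W n b) = phi L W (sum_list la) (std la b)"
proof
  fix q
  show "std la (star L W n b) q = phi L W (sum_list la) (std la b) q"
  proof (cases "q \<in> cells la")
    case False
    then have nq: "\<not> (fst q < L \<and> snd q < W)" using inR[OF la] by blast
    have "std la (star L W n b) q = 0" using False by (rule std_out)
    moreover have "phi L W (sum_list la) (std la b) q = 0" unfolding phi_def using nq by (rule if_not_P)
    ultimately show ?thesis by simp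
  next
    case True
    have qi: "fst q < L \<and> snd q < W" using True inR[OF la] by blast
    define q0 where "q0 = rot L W q"
    have q0c: "q0 \<in> cells la" using rot_in[OF qi] la cells_rect q0_def by blast
    have inC: "p \<in> cells la \<longleftrightarrow> fst p < L \<and> snd p < W" for p using inR[OF la] .
    have bv: "p \<in> cells la \<Longrightarrow> b p \<le> n" for p using b by (auto simp: SSYT_def)
    have key: "ltb (star L W n b) p q \<longleftrightarrow> ltb b q0 (rot L W p)" if pc: "p \<in> cells la" for p
    proof -
      have pi: "fst p < L \<and> snd p < W" using pc inC by blast
      have r1: "rot L W p \<in> cells la" using rot_in[OF pi] inC by blast
      have v1: "b (rot L W p) \<le> n" "b q0 \<le> n" using bv r1 q0c by auto
      have rb: "read_before p q \<longleftrightarrow> read_before q0 (rot L W p)"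
        using pi qi unfolding q0_def rot_def read_before_def by auto
      show ?thesis unfolding ltb_def star_def q0_def[symmetric] using pi qi rb v1 q0_def by auto
    qed
    have S: "{p \<in> cells la. ltb (star L W n b) p q} = rot L W ` {p' \<in> cells la. ltb b q0 p'}"
    proof
      show "{p \<in> cells la. ltb (star L W n b) p q} \<subseteq> rot L W ` {p' \<in> cells la. ltb b q0 p'}"
      proof
        fix p assume p: "p \<in> {p \<in> cells la. ltb (star L W n b) p q}"
        then have pi: "fst p < L \<and> snd p < W" using inC by blast
        have "rot L W p \<in> {p' \<in> cells la. ltb b q0 p'}" using p key rot_in[OF pi] inC by blast
        then show "p \<in> rot L W ` {p' \<in> cells la. ltb b q0 p'}" using rot_rot[OF pi] by force
      qed
    next
      show "rot L W ` {p' \<in> cells la. ltb b q0 p'} \<subseteq> {p \<in> cells la. ltb (star L W n b) p q}"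
      proof
        fix p assume "p \<in> rot L W ` {p' \<in> cells la. ltb b q0 p'}"
        then obtain p' where p': "p' \<in> cells la" "ltb b q0 p'" "p = rot L W p'" by blast
        have pi: "fst p' < L \<and> snd p' < W" using p' inC by blast
        have pc: "p \<in> cells la" using rot_in[OF pi] p' inC by blast
        have "ltb (star L W n b) p q" using key[OF pc] p' rot_rot[OF pi] by simp
        then show "p \<in> {p \<in> cells la. ltb (star L W n b) p q}" using pc by blast
      qed
    qed
    have inj: "inj_on (rot L W) (cells la)"
      by (rule inj_onI) (metis inC rot_rot)
    have c1: "card {p \<in> cells la. ltb (star L W n b) p q} = card {p' \<in> cells la. ltb b q0 p'}"
      unfolding S by (rule card_image) (rule inj_on_subset[OF inj], blast)
    have split: "cells la - {q0} = {p' \<in> cells la. ltb b q0 p'} \<union> {p' \<in> cells la. ltb b p' q0}"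
      using ltb_total ltb_irrefl by blast
    have disj: "{p' \<in> cells la. ltb b q0 p'} \<inter> {p' \<in> cells la. ltb b p' q0} = {}"
      using ltb_asym by blast
    have "card (cells la - {q0}) = card {p' \<in> cells la. ltb b q0 p'} + card {p' \<in> cells la. ltb b p' q0}"
      unfolding split by (rule card_Un_disjoint) (auto simp: finite_cells disj)
    moreover have "card (cells la - {q0}) = sum_list la - 1" using q0c by (simp add: card_cells finite_cells)
    moreover have "std la b q0 = card {p' \<in> cells la. ltb b p' q0} + 1" using std_eq[OF q0c] .
    moreover have "std la b q0 \<le> sum_list la" using std_le_N[OF q0c] .
    ultimately have "card {p' \<in> cells la. ltb b q0 p'} + 1 = Suc (sum_list la) - std la b q0"
      by linarith
    then show ?thesis using std_eq[OF True, of "star L W n b"] c1 qi q0_def by (simp add: phi_def)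
  qed
qed

lemma phi_phi:
  assumes la: "la = replicate L W" and T: "T \<in> SYT la"
  shows "phi L W (sum_list la) (phi L W (sum_list la) T) = T"
proof
  fix p
  have bij: "bij_betw T (cells la) {1..sum_list la}" using T by (simp add: SYT_def)
  show "phi L W (sum_list la) (phi L W (sum_list la) T) p = T p"
  proof (cases "fst p < L \<and> snd p < W")
    case False
    then have "p \<notin> cells la" using inR[OF la] by blast
    then have "T p = 0" using T unfolding SYT_def by blast
    moreover have "phi L W (sum_list la) (phi L W (sum_list la) T) p = 0" unfolding phi_def using False by (rule if_not_P)
    ultimately show ?thesis by simp
  next
    case True
    have "rot L W p \<in> cells la" using rot_in[OF True] inR[OF la] by blast
    then have "T (rot L W (rot L W p)) \<le> sum_list la"
      using bij_betwE[OF bij] rot_rot[OF True] True inR[OF la] by fastforce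
    then show ?thesis using True rot_in[OF True] rot_rot[OF True] by (simp add: phi_def)
  qed
qed



lemma row_word_le: "b \<in> SSYT la n \<Longrightarrow> \<forall>u\<in>set (row_word la b). u \<le> n"
  unfolding row_word_cl using set_cell_list by (auto simp: SSYT_def)

lemma edge_rev:
  assumes la: "la = replicate L W" and P: "is_partition la" and e: "(T, T') \<in> CS_edges la n"
  shows "(phi L W (sum_list la) T', phi L W (sum_list la) T) \<in> CS_edges la n"
proof -
  obtain b b' i where b: "b \<in> SSYT la n" and b': "b' \<in> SSYT la n" and i: "1 \<le> i" "i < n"
    and T: "std la b = T" and T': "std la b' = T'" and cf: "crystal_f la i b b'"
    and TT: "T \<in> SYT la" "T' \<in> SYT la" "T \<noteq> T'"
    using e unfolding CS_edges_def by blast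
  have s1: "std la (star L W n b) = phi L W (sum_list la) T" using std_star[OF la b] T by simp
  have s2: "std la (star L W n b') = phi L W (sum_list la) T'" using std_star[OF la b'] T' by simp
  have cf2: "crystal_f la (n - i) (star L W n b') (star L W n b)"
    unfolding crystal_f_def row_word_star[OF la]
    using f_rc[of i "row_word la b" "row_word la b'" n] cf i row_word_le[OF b]
    by (simp add: crystal_f_def)
  have ne: "phi L W (sum_list la) T' \<noteq> phi L W (sum_list la) T"
    using phi_phi[OF la TT(1)] phi_phi[OF la TT(2)] TT(3) by metis
  have S1: "phi L W (sum_list la) T \<in> SYT la" using s1 std_SYT[OF P star_SSYT[OF la b]] by simp
  have S2: "phi L W (sum_list la) T' \<in> SYT la" using s2 std_SYT[OF P star_SSYT[OF la b']] by simp
  show ?thesis unfolding CS_edges_def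
    using S1 S2 ne star_SSYT[OF la b] star_SSYT[OF la b'] s1 s2 cf2 i by fastforce
qed

lemma rtrancl_rev:
  assumes la: "la = replicate L W" and P: "is_partition la" and e: "(T, T') \<in> (CS_edges la n)\<^sup>*"
  shows "(phi L W (sum_list la) T', phi L W (sum_list la) T) \<in> (CS_edges la n)\<^sup>*"
  using e
proof (induction rule: rtrancl_induct)
  case base then show ?case by simp
next
  case (step y z)
  then show ?case using edge_rev[OF la P step.hyps(2)] by (meson converse_rtrancl_into_rtrancl)
qed

definition ell :: "nat \<Rightarrow> nat \<Rightarrow> nat \<Rightarrow> (nat \<times> nat) \<Rightarrow> nat" where
  "ell L W n p = (if fst p < L \<and> snd p < W then n - (L - Suc (fst p)) else 0)"

lemma dead:
  assumes la: "la = replicate L W" and b: "b \<in> SSYT la n" and Nn: "sum_list la \<le> n"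
    and nf: "\<forall>i. 1 \<le> i \<and> i < n \<longrightarrow> f_word i (row_word la b) = None"
  shows "b = ell L W n"
proof -
  have inC: "p \<in> cells la \<longleftrightarrow> fst p < L \<and> snd p < W" for p using la by (simp add: cells_rect)
  have Ln: "W > 0 \<Longrightarrow> L \<le> n"
  proof -
    assume W: "W > 0"
    have "L \<le> L * W" using W by simp
    moreover have "L * W \<le> n" using Nn la by (simp add: sum_list_replicate)
    ultimately show "L \<le> n" by linarith
  qed
  have main: "\<forall>c<W. b (L - Suc j, c) = n - j" if "j < L" for j
    using that
  proof (induction j rule: less_induct)
    case (less j)
    define r where "r = L - Suc j"
    show ?case
    proof (cases "W = 0")
      case True then show ?thesis by simp
    next
      case False
      then have W: "W > 0" by simp
      have rc: "(r, c) \<in> cells la" if "c < W" for c using that inC less.prems r_def by simp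
      have ub: "b (r, c) \<le> n - j" if c: "c < W" for c
      proof (cases j)
        case 0 then show ?thesis using b rc[OF c] by (auto simp: SSYT_def)
      next
        case (Suc j0)
        then have e: "L - Suc j0 = Suc r" using less.prems r_def by simp
        have "(Suc r, c) \<in> cells la" using inC c e less.prems Suc by simp
        then have "b (r, c) < b (Suc r, c)" using b by (auto simp: SSYT_def)
        moreover have "b (Suc r, c) = n - j0" using less.IH[of j0] Suc less.prems c e by simp
        ultimately show ?thesis using Suc by simp
      qed
      define v where "v = b (r, 0)"
      have v1: "1 \<le> v" using b rc[OF W] v_def by (auto simp: SSYT_def)
      have vge: "n - j \<le> v"
      proof (rule ccontr)
        assume "\<not> ?thesis"
        then have vlt: "v < n - j" by simp
        obtain k where k: "k < sum_list la" "cell_list la ! k = (r, 0)" using cl_index[OF rc[OF W]] by blast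
        have P0: "Pw v (row_word la b) q = 0" if q: "q \<le> k" for q
        proof -
          have "(\<Sum>s<q. wt v (b (cell_list la ! s))) = 0"
          proof (rule sum.neutral, rule ballI)
            fix s assume "s \<in> {..<q}"
            then have sk: "s < k" using q by simp
            then have sN: "s < sum_list la" using k by simp
            have "read_before (cell_list la ! s) (r, 0)" using cl_read_iff[of s la k] sk sN k length_cell_list by simp
            then have fr: "fst (cell_list la ! s) > r" by (auto simp: read_before_def)
            have ci: "fst (cell_list la ! s) < L \<and> snd (cell_list la ! s) < W" using cl_in[OF sN] inC by blast
            define j' where "j' = L - Suc (fst (cell_list la ! s))"
            have j'j: "j' < j" using fr ci r_def less.prems j'_def by arith
            have ej: "L - Suc j' = fst (cell_list la ! s)" using ci j'_def by simp
            have "b (cell_list la ! s) = n - j'"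
              using less.IH[OF j'j] j'j less.prems ci ej by (metis prod.collapse less_trans)
            moreover have "j < n" using less.prems Ln W by simp
            ultimately have "b (cell_list la ! s) > Suc v" using vlt j'j by simp
            then show "wt v (b (cell_list la ! s)) = 0" by (simp add: wt_def)
          qed
          then show ?thesis using Pw_cells[of q la v b] q k by simp
        qed
        have "U v (row_word la b) k"
          unfolding U_def using k P0 v_def by (simp add: row_word_cl length_cell_list)
        moreover have "v < n" using vlt by simp
        ultimately show False using nf v1 f_word_None by blast
      qed
      show ?thesis
      proof (intro allI impI)
        fix c assume c: "c < W"
        have "b (r, 0) \<le> b (r, c)" using row_mono[OF b rc[OF c]] by simp
        then show "b (L - Suc j, c) = n - j" using ub[OF c] vge v_def r_def by simp
      qed
    qed
  qed
  show ?thesis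
  proof
    fix p
    show "b p = ell L W n p"
    proof (cases "fst p < L \<and> snd p < W")
      case False
      then have "p \<notin> cells la" using inC by blast
      then have "b p = 0" using SSYT_out[OF b] by blast
      then show ?thesis using False unfolding ell_def by auto
    next
      case True
      define j where "j = L - Suc (fst p)"
      have "j < L" "L - Suc j = fst p" using True j_def by auto
      then have "b (fst p, snd p) = n - j" using main[of j] True by metis
      then show ?thesis using True j_def by (simp add: ell_def)
    qed
  qed
qed



lemma ell_SSYT:
  assumes la: "la = replicate L W" and Nn: "sum_list la \<le> n"
  shows "ell L W n \<in> SSYT la n"
proof -
  have inC: "p \<in> cells la \<longleftrightarrow> fst p < L \<and> snd p < W" for p using la by (simp add: cells_rect)
  have Ln: "W > 0 \<Longrightarrow> L \<le> n"
  proof -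
    assume W: "W > 0"
    have "L \<le> L * W" using W by simp
    moreover have "L * W \<le> n" using Nn la by (simp add: sum_list_replicate)
    ultimately show "L \<le> n" by linarith
  qed
  show ?thesis
    unfolding SSYT_def
  proof (intro CollectI conjI allI impI ballI)
    fix p assume "p \<notin> cells la" then show "ell L W n p = 0" using inC unfolding ell_def by auto
  next
    fix p assume "p \<in> cells la"
    then have "fst p < L" "snd p < W" using inC by auto
    then show "1 \<le> ell L W n p" "ell L W n p \<le> n" using Ln by (auto simp: ell_def)
  next
    fix r c assume "(r, Suc c) \<in> cells la"
    then show "ell L W n (r, c) \<le> ell L W n (r, Suc c)" using inC by (auto simp: ell_def)
  next
    fix r c assume "(Suc r, c) \<in> cells la"
    then have "Suc r < L" "c < W" using inC by auto
    then show "ell L W n (r, c) < ell L W n (Suc r, c)" using Ln by (auto simp: ell_def)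
  qed
qed

lemma to_ell:
  assumes la: "la = replicate L W" and P: "is_partition la" and Nn: "sum_list la \<le> n"
  shows "b \<in> SSYT la n \<Longrightarrow> (std la b, std la (ell L W n)) \<in> (CS_edges la n)\<^sup>*"
proof (induction "\<Sum>p\<in>cells la. n - b p" arbitrary: b rule: less_induct)
  case less
  note b = less.prems
  show ?case
  proof (cases "\<forall>i. 1 \<le> i \<and> i < n \<longrightarrow> f_word i (row_word la b) = None")
    case True
    then have "b = ell L W n" using dead[OF la b Nn] by blast
    then show ?thesis by simp
  next
    case False
    then obtain i w' where i: "1 \<le> i" "i < n" and f: "f_word i (row_word la b) = Some w'" by auto
    obtain k where Uk: "U i (row_word la b) k" and mk: "\<forall>k'. U i (row_word la b) k' \<longrightarrow> k' \<le> k"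
      and w': "w' = (row_word la b)[k := Suc i]" using f_word_Some[OF f] by blast
    have k: "k < sum_list la" and bx: "b (cell_list la ! k) = i" using U_val[OF Uk] by auto
    define b' where "b' = b(cell_list la ! k := Suc i)"
    have b'S: "b' \<in> SSYT la n" using f_SSYT[OF b i k Uk mk] b'_def by simp
    have rw: "row_word la b' = w'"
      using map_upd_cl[of k la b "Suc i"] k w' b'_def by (simp add: row_word_cl length_cell_list)
    have cf: "crystal_f la i b b'" using f rw by (simp add: crystal_f_def)
    have xc: "cell_list la ! k \<in> cells la" using cl_in[OF k] .
    have lt: "(\<Sum>p\<in>cells la. n - b' p) < (\<Sum>p\<in>cells la. n - b p)"
    proof (rule sum_strict_mono_ex1)
      show "finite (cells la)" by (rule finite_cells)
      show "\<forall>p\<in>cells la. n - b' p \<le> n - b p" using bx b'_def by auto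
      show "\<exists>p\<in>cells la. n - b' p < n - b p" using xc bx b'_def i by force
    qed
    have IH: "(std la b', std la (ell L W n)) \<in> (CS_edges la n)\<^sup>*" using less.hyps[OF lt b'S] .
    show ?thesis
    proof (cases "std la b = std la b'")
      case True then show ?thesis using IH by simp
    next
      case False
      have "(std la b, std la b') \<in> CS_edges la n"
        unfolding CS_edges_def using std_SYT[OF P b] std_SYT[OF P b'S] False b b'S i cf by blast
      then show ?thesis using IH by (meson converse_rtrancl_into_rtrancl)
    qed
  qed
qed

lemma std_star_ell:
  assumes la: "la = replicate L W" and Nn: "sum_list la \<le> n"
  shows "std la (star L W n (ell L W n)) = std la (ell L W n)"
proof (rule std_cong, intro ballI)
  have inC: "p \<in> cells la \<longleftrightarrow> fst p < L \<and> snd p < W" for p using la by (simp add: cells_rect)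
  have Ln: "W > 0 \<Longrightarrow> L \<le> n"
  proof -
    assume W: "W > 0"
    have "L \<le> L * W" using W by simp
    moreover have "L * W \<le> n" using Nn la by (simp add: sum_list_replicate)
    ultimately show "L \<le> n" by linarith
  qed
  have e1: "star L W n (ell L W n) p = Suc (fst p)" if "p \<in> cells la" for p
    using that inC[of p] Ln by (auto simp: star_def ell_def rot_def)
  have e2: "ell L W n p + L = n + Suc (fst p)" if "p \<in> cells la" for p
    using that inC[of p] Ln by (auto simp: ell_def)
  fix p q assume pq: "p \<in> cells la" "q \<in> cells la"
  have a1: "star L W n (ell L W n) p = Suc (fst p)" "star L W n (ell L W n) q = Suc (fst q)"
    using e1 pq by auto
  have a2: "ell L W n p + L = n + Suc (fst p)" "ell L W n q + L = n + Suc (fst q)"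
    using e2 pq by auto
  show "(star L W n (ell L W n) p < star L W n (ell L W n) q \<longleftrightarrow> ell L W n p < ell L W n q) \<and>
      (star L W n (ell L W n) p = star L W n (ell L W n) q \<longleftrightarrow> ell L W n p = ell L W n q)"
    unfolding a1 using a2 by linarith
qed

lemma rect:
  assumes la: "la = replicate L W" and P: "is_partition la" and Nn: "sum_list la \<le> n"
  shows "strongly_connected_on (SYT la) (CS_edges la n)"
  unfolding strongly_connected_on_def
proof (intro ballI)
  fix x y assume x: "x \<in> SYT la" and y: "y \<in> SYT la"
  define H where "H = std la (ell L W n)"
  have eS: "ell L W n \<in> SSYT la n" using ell_SSYT[OF la Nn] .
  have pH: "phi L W (sum_list la) H = H"
    using std_star[OF la eS] std_star_ell[OF la Nn] H_def by simp
  have xH: "(x, H) \<in> (CS_edges la n)\<^sup>*"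
    using to_ell[OF la P Nn SYT_SSYT[OF x Nn]] std_SYT_id[OF x] H_def by simp
  have ySS: "y \<in> SSYT la n" using SYT_SSYT[OF y Nn] .
  have py: "phi L W (sum_list la) y = std la (star L W n y)"
    using std_star[OF la ySS] std_SYT_id[OF y] by simp
  have pyH: "(phi L W (sum_list la) y, H) \<in> (CS_edges la n)\<^sup>*"
    using to_ell[OF la P Nn star_SSYT[OF la ySS]] py H_def by simp
  have "(phi L W (sum_list la) H, phi L W (sum_list la) (phi L W (sum_list la) y)) \<in> (CS_edges la n)\<^sup>*"
    using rtrancl_rev[OF la P pyH] .
  then have "(H, y) \<in> (CS_edges la n)\<^sup>*" using pH phi_phi[OF la y] by simp
  then show "(x, y) \<in> (CS_edges la n)\<^sup>*" using xH by simp
qed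

theorem theorem4p16:
  fixes la :: "nat list" and n :: nat
  assumes "is_partition la" and "sum_list la \<le> n"
  shows "strongly_connected_on (SYT la) (CS_edges la n) \<longleftrightarrow> is_rectangle la"
proof
  assume "strongly_connected_on (SYT la) (CS_edges la n)"
  then show "is_rectangle la" using nonrect[OF assms] by blast
next
  assume "is_rectangle la"
  then obtain W L where "la = replicate L W" unfolding is_rectangle_def by blast
  then show "strongly_connected_on (SYT la) (CS_edges la n)" using rect assms by blast
qed

end
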